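(* Let $\mathbf T:=\mathbf T_0^{\otimes m}$, $\mathbf P\in\mathrm{Aut}(\mathbf T)$ and $\mathbf T_{\mathbf P}:=\mathbf P\mathbf T$. Then $$\mathrm{Aut}(\mathbf T_{\mathbf P})=\{\mathbf Q\in\mathrm{Aut}(\mathbf T):\mathbf Q\mathbf P=\mathbf P\mathbf Q\}.$$ Moreover, writing $\mathbf P=\mathbf P_\sigma$ with $\sigma\in\mathcal S_m$, one has $\mathrm{Aut}(\mathbf T_{\mathbf P})=\{\mathbf P_\tau:\tau\in\mathcal S_m,\ \tau\sigma=\sigma\tau\}$.
   Context: $\mathbf T_0=\begin{pmatrix}1&0\\1&1\end{pmatrix}$; rows/columns of $\mathbf T_0^{\otimes m}$ indexed by $x\in\{0,1\}^m$ via the Kronecker rule. For any matrix $\mathbf M$, $\mathrm{Aut}(\mathbf M)$ is the set of permutation matrices $\mathbf Q$ with $\mathbf Q^\top\mathbf M\mathbf Q=\mathbf M$. For $\sigma\in\mathcal S_m$, $\mathbf P_\sigma$ is the permutation matrix with $\mathbf P_\sigma\mathbf e_{(x_1,\dots,x_m)}=\mathbf e_{(x_{\sigma(1)},\dots,x_{\sigma(m)})}$; every element of $\mathrm{Aut}(\mathbf T)$ is of this form for a unique $\sigma$. *)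

theory Defs
  imports "Jordan_Normal_Form.Matrix" "HOL-Combinatorics.Permutations"
begin

definition T0 :: "int mat" where
  "T0 = mat_of_rows_list 2 [[1, 0], [1, 1]]"

definition kron :: "int mat \<Rightarrow> int mat \<Rightarrow> int mat" where
  "kron A B = mat (dim_row A * dim_row B) (dim_col A * dim_col B)
     (\<lambda>(i, j). A $$ (i div dim_row B, j div dim_col B) * B $$ (i mod dim_row B, j mod dim_col B))"

definition Tm :: "nat \<Rightarrow> int mat" where
  "Tm m = ((kron T0) ^^ m) (1\<^sub>m 1)"

definition is_perm_mat :: "nat \<Rightarrow> int mat \<Rightarrow> bool" where
  "is_perm_mat n Q \<longleftrightarrow> (\<exists>\<pi>. \<pi> permutes {..<n} \<and>
      Q = mat n n (\<lambda>(i, j). if i = \<pi> j then 1 else 0))"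

definition Aut :: "int mat \<Rightarrow> int mat set" where
  "Aut M = {Q. is_perm_mat (dim_row M) Q \<and> transpose_mat Q * M * Q = M}"

(* Kronecker rule: x = (x_1,...,x_m) \<in> {0,1}^m has index \<Sum> x_i 2^(m-i) (x_1 most significant) *)
definition bits_index :: "nat \<Rightarrow> (nat \<Rightarrow> bool) \<Rightarrow> nat" where
  "bits_index m x = (\<Sum>i = 1..m. if x i then 2 ^ (m - i) else 0)"

definition index_bit :: "nat \<Rightarrow> nat \<Rightarrow> nat \<Rightarrow> bool" where
  "index_bit m k i = odd (k div 2 ^ (m - i))"

(* P_\<sigma> e_(x_1..x_m) = e_(x_\<sigma>(1)..x_\<sigma>(m)) *)
definition Psig :: "nat \<Rightarrow> (nat \<Rightarrow> nat) \<Rightarrow> int mat" where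
  "Psig m \<sigma> = mat (2 ^ m) (2 ^ m)
     (\<lambda>(i, j). if i = bits_index m (\<lambda>l. index_bit m j (\<sigma> l)) then 1 else 0)"

end

theory Submission
  imports Defs
begin

lemma index_bit_bit: "index_bit m j l = bit j (m - l)"
  by (simp add: index_bit_def bit_iff_odd)

lemma bits_index_horner: "bits_index m x = horner_sum of_bool 2 (map (\<lambda>k. x (m - k)) [0..<m])"
proof -
  have "bits_index m x = (\<Sum>n = 0..<m. (if x (m - n) then 2 ^ n else 0))"
    unfolding bits_index_def
    by (rule sum.reindex_bij_witness[of _ "\<lambda>n. m - n" "\<lambda>i. m - i"]) auto
  also have "\<dots> = horner_sum of_bool 2 (map (\<lambda>k. x (m - k)) [0..<m])"
    unfolding horner_sum_eq_sum by (rule sum.cong) auto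
  finally show ?thesis .
qed

lemma bits_index_lt: "bits_index m x < 2 ^ m"
  unfolding bits_index_horner using horner_sum_bound[of "map (\<lambda>k. x (m - k)) [0..<m]"] by simp

lemma index_bit_bits_index: "l \<in> {1..m} \<Longrightarrow> index_bit m (bits_index m x) l = x l"
  unfolding bits_index_horner index_bit_bit
  by (auto simp: bit_horner_sum_bit_iff)

lemma bits_index_cong: "(\<And>l. l \<in> {1..m} \<Longrightarrow> x l = y l) \<Longrightarrow> bits_index m x = bits_index m y"
  unfolding bits_index_def by (rule sum.cong) auto

lemma bits_index_index_bit: "j < 2 ^ m \<Longrightarrow> bits_index m (index_bit m j) = j"
proof -
  assume j: "j < 2 ^ m"
  have "map (\<lambda>k. index_bit m j (m - k)) [0..<m] = map (bit j) [0..<m]"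
    by (rule map_cong) (auto simp: index_bit_bit)
  then have "bits_index m (index_bit m j) = horner_sum of_bool 2 (map (bit j) [0..<m])"
    unfolding bits_index_horner by metis
  also have "\<dots> = j" using j by (simp add: horner_sum_bit_eq_take_bit take_bit_nat_eq_self)
  finally show ?thesis .
qed

lemma T0_carrier: "T0 \<in> carrier_mat 2 2"
  unfolding T0_def mat_of_rows_list_def by (intro carrier_matI) auto

lemma T0_entry: "a < 2 \<Longrightarrow> b < 2 \<Longrightarrow> T0 $$ (a, b) = (if b \<le> a then 1 else 0)"
  by (cases a; cases b) (auto simp: T0_def mat_of_rows_list_def less_2_cases_iff)

lemma Tm_entry:
  "Tm m \<in> carrier_mat (2^m) (2^m) \<and>
   (\<forall>i<2^m. \<forall>j<2^m. Tm m $$ (i, j) = (if (\<forall>k<m. bit j k \<longrightarrow> bit i k) then 1 else 0))"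
proof (induction m)
  case 0
  then show ?case by (simp add: Tm_def)
next
  case (Suc m)
  have TS: "Tm (Suc m) = kron T0 (Tm m)" by (simp add: Tm_def)
  have c: "Tm m \<in> carrier_mat (2^m) (2^m)" using Suc by blast
  have e: "\<And>i j. i<2^m \<Longrightarrow> j<2^m \<Longrightarrow> Tm m $$ (i, j) = (if (\<forall>k<m. bit j k \<longrightarrow> bit i k) then 1 else 0)"
    using Suc by blast
  have car: "Tm (Suc m) \<in> carrier_mat (2^Suc m) (2^Suc m)"
    using c T0_carrier by (simp add: TS kron_def)
  have bm: "bit i m \<longleftrightarrow> i div 2^m = 1" if "i < 2^Suc m" for i :: nat
  proof -
    have "i div 2^m < 2" using that by (simp add: less_mult_imp_div_less)
    then show ?thesis by (auto simp: bit_iff_odd less_2_cases_iff)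
  qed
  have bk: "bit (i mod 2^m) k \<longleftrightarrow> k < m \<and> bit i k" for i k :: nat
    by (simp flip: take_bit_eq_mod add: bit_take_bit_iff)
  have "Tm (Suc m) $$ (i, j) = (if (\<forall>k<Suc m. bit j k \<longrightarrow> bit i k) then 1 else 0)"
    if i: "i < 2^Suc m" and j: "j < 2^Suc m" for i j
  proof -
    have id: "i div 2^m < 2" "j div 2^m < 2" using i j by (simp_all add: less_mult_imp_div_less)
    have "Tm (Suc m) $$ (i, j) = T0 $$ (i div 2^m, j div 2^m) * Tm m $$ (i mod 2^m, j mod 2^m)"
      using i j c T0_carrier by (simp add: TS kron_def)
    also have "\<dots> = (if j div 2^m \<le> i div 2^m then 1 else 0) * (if (\<forall>k<m. bit j k \<longrightarrow> bit i k) then 1 else 0)"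
      using id e[of "i mod 2^m" "j mod 2^m"] by (simp add: T0_entry bk)
    also have "\<dots> = (if (\<forall>k<Suc m. bit j k \<longrightarrow> bit i k) then 1 else 0)"
      using bm[OF i] bm[OF j] id by (auto simp: less_Suc_eq less_2_cases_iff)
    finally show ?thesis .
  qed
  then show ?case using car by blast
qed


abbreviation invf :: "(nat \<Rightarrow> nat) \<Rightarrow> nat \<Rightarrow> nat" where "invf f \<equiv> Hilbert_Choice.inv f"

definition pm :: "nat \<Rightarrow> (nat \<Rightarrow> nat) \<Rightarrow> int mat" where
  "pm n f = mat n n (\<lambda>(i, j). if i = f j then 1 else 0)"

lemma pm_carrier[simp]: "pm n f \<in> carrier_mat n n" "dim_row (pm n f) = n" "dim_col (pm n f) = n"
  by (auto simp: pm_def)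

lemma pm_entry: "i < n \<Longrightarrow> j < n \<Longrightarrow> pm n f $$ (i, j) = (if i = f j then 1 else 0)"
  by (simp add: pm_def)

lemma sum_delta_aux:
  fixes h :: "nat \<Rightarrow> int"
  assumes "a < n"
  shows "(\<Sum>k\<in>{0..<n}. (if k = a then h k else 0)) = h a"
  using assms by (simp add: sum.delta)

lemma pm_left:
  assumes p: "p permutes {..<n}" and M: "M \<in> carrier_mat n nc" and i: "i < n" and j: "j < nc"
  shows "(pm n p * M) $$ (i, j) = M $$ (invf p i, j)"
proof -
  have ip: "invf p i < n" using permutes_in_image[OF permutes_inv[OF p]] i by simp
  have "(pm n p * M) $$ (i, j) = (\<Sum>k\<in>{0..<n}. (if i = p k then 1 else 0) * M $$ (k, j))"
    using M i j by (simp add: scalar_prod_def pm_def)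
  also have "\<dots> = (\<Sum>k\<in>{0..<n}. (if k = invf p i then M $$ (k, j) else 0))"
    by (rule sum.cong) (auto simp: permutes_inverses[OF p])
  also have "\<dots> = M $$ (invf p i, j)" by (rule sum_delta_aux[OF ip])
  finally show ?thesis .
qed

lemma pm_right:
  assumes f: "f permutes {..<n}" and M: "M \<in> carrier_mat nr n" and i: "i < nr" and j: "j < n"
  shows "(M * pm n f) $$ (i, j) = M $$ (i, f j)"
proof -
  have fj: "f j < n" using permutes_in_image[OF f] j by simp
  have "(M * pm n f) $$ (i, j) = (\<Sum>k\<in>{0..<n}. M $$ (i, k) * (if k = f j then 1 else 0))"
    using M i j by (simp add: scalar_prod_def pm_def)
  also have "\<dots> = (\<Sum>k\<in>{0..<n}. (if k = f j then M $$ (i, k) else 0))"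
    by (rule sum.cong) auto
  also have "\<dots> = M $$ (i, f j)" by (rule sum_delta_aux[OF fj])
  finally show ?thesis .
qed

lemma pm_transpose:
  assumes p: "p permutes {..<n}"
  shows "transpose_mat (pm n p) = pm n (invf p)"
  by (rule eq_matI) (auto simp: pm_def permutes_inv_eq[OF p] permutes_inverses[OF p])

lemma pm_mult:
  assumes f: "f permutes {..<n}" and g: "g permutes {..<n}"
  shows "pm n f * pm n g = pm n (f \<circ> g)"
proof (rule eq_matI)
  fix i j assume i: "i < dim_row (pm n (f \<circ> g))" and j: "j < dim_col (pm n (f \<circ> g))"
  then show "(pm n f * pm n g) $$ (i, j) = pm n (f \<circ> g) $$ (i, j)"
    using pm_right[OF g, of "pm n f" n i j] permutes_in_image[OF g, of j]
    by (simp add: pm_def)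
qed auto

lemma pm_inj:
  assumes f: "f permutes {..<n}" and g: "g permutes {..<n}" and e: "pm n f = pm n g"
  shows "f = g"
proof
  fix j show "f j = g j"
  proof (cases "j < n")
    case True
    have "f j < n" using permutes_in_image[OF f] True by simp
    then have "pm n f $$ (f j, j) = 1" "pm n g $$ (f j, j) = (if f j = g j then 1 else 0)"
      using True by (simp_all add: pm_def)
    then show ?thesis using e by (auto split: if_splits)
  next
    case False
    then show ?thesis using permutes_not_in[OF f] permutes_not_in[OF g] by simp
  qed
qed

lemma is_perm_mat_pm: "is_perm_mat n Q \<longleftrightarrow> (\<exists>\<pi>. \<pi> permutes {..<n} \<and> Q = pm n \<pi>)"
  by (simp add: is_perm_mat_def pm_def)

lemma conj_pm:
  assumes p: "p permutes {..<n}" and M: "M \<in> carrier_mat n n"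
  shows "transpose_mat (pm n p) * M * pm n p = mat n n (\<lambda>(i, j). M $$ (p i, p j))"
proof (rule eq_matI)
  fix i j assume i: "i < dim_row (mat n n (\<lambda>(i, j). M $$ (p i, p j)))"
    and j: "j < dim_col (mat n n (\<lambda>(i, j). M $$ (p i, p j)))"
  have ip: "invf p permutes {..<n}" using permutes_inv[OF p] .
  have pj: "p j < n" using permutes_in_image[OF p] j by simp
  have c: "pm n (invf p) * M \<in> carrier_mat n n" by (rule mult_carrier_mat[OF pm_carrier(1) M])
  show "(transpose_mat (pm n p) * M * pm n p) $$ (i, j) = mat n n (\<lambda>(i, j). M $$ (p i, p j)) $$ (i, j)"
    using i j pm_right[OF p c, of i j] pm_left[OF ip M, of i "p j"] pj
    by (simp add: pm_transpose[OF p] permutes_inv_inv[OF p])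
qed (use M in auto)

lemma Aut_iff:
  assumes M: "M \<in> carrier_mat n n"
  shows "Q \<in> Aut M \<longleftrightarrow> (\<exists>\<pi>. \<pi> permutes {..<n} \<and> Q = pm n \<pi> \<and>
            (\<forall>i<n. \<forall>j<n. M $$ (\<pi> i, \<pi> j) = M $$ (i, j)))"
proof -
  have "transpose_mat (pm n \<pi>) * M * pm n \<pi> = M \<longleftrightarrow> (\<forall>i<n. \<forall>j<n. M $$ (\<pi> i, \<pi> j) = M $$ (i, j))"
    if "\<pi> permutes {..<n}" for \<pi>
    using M by (auto simp: conj_pm[OF that M] mat_eq_iff)
  then show ?thesis using M by (auto simp: Aut_def is_perm_mat_pm)
qed

lemma order_core:
  fixes le :: "nat \<Rightarrow> nat \<Rightarrow> bool"
  assumes trans: "\<And>a b c. a < N \<Longrightarrow> b < N \<Longrightarrow> c < N \<Longrightarrow> le a b \<Longrightarrow> le b c \<Longrightarrow> le a c"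
    and antisym: "\<And>a b. a < N \<Longrightarrow> b < N \<Longrightarrow> le a b \<Longrightarrow> le b a \<Longrightarrow> a = b"
    and refl: "\<And>a. a < N \<Longrightarrow> le a a"
    and p: "p permutes {..<N}" and \<pi>: "\<pi> permutes {..<N}"
    and H: "\<forall>i<N. \<forall>j<N. le (\<pi> j) (invf p (\<pi> i)) \<longleftrightarrow> le j (invf p i)"
  shows "\<pi> \<circ> p = p \<circ> \<pi> \<and> (\<forall>i<N. \<forall>j<N. le (\<pi> j) (\<pi> i) \<longleftrightarrow> le j i)"
proof -
  define \<phi> where "\<phi> = invf p \<circ> \<pi> \<circ> p"
  have \<phi>p: "\<phi> permutes {..<N}" unfolding \<phi>_def
    by (intro permutes_compose permutes_inv p \<pi>)
  have inN: "\<And>f x. f permutes {..<N} \<Longrightarrow> x < N \<Longrightarrow> f x < N"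
    using permutes_in_image by fastforce
  have H': "le (\<pi> j) (\<phi> a) \<longleftrightarrow> le j a" if "a < N" "j < N" for a j
    using H[rule_format, of "p a" j] that inN[OF p] by (simp add: \<phi>_def permutes_inverses[OF p])
  have mono: "le (\<phi> a) (\<phi> c)" if "a < N" "c < N" "le a c" for a c
  proof -
    define j where "j = invf \<pi> (\<phi> a)"
    have jN: "j < N" unfolding j_def using inN[OF permutes_inv[OF \<pi>]] inN[OF \<phi>p] that by blast
    have pj: "\<pi> j = \<phi> a" unfolding j_def by (simp add: permutes_inverses[OF \<pi>])
    have "le j a" using H'[OF that(1) jN] pj refl inN[OF \<phi>p] that by simp
    then have "le j c" using trans jN that by blast
    then show ?thesis using H'[OF that(2) jN] pj by simp
  qed
  have eq: "\<pi> a = \<phi> a" if a: "a < N" for a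
  proof -
    define c where "c = invf \<phi> (\<pi> a)"
    have cN: "c < N" unfolding c_def using inN[OF permutes_inv[OF \<phi>p]] inN[OF \<pi>] a by blast
    have pc: "\<phi> c = \<pi> a" unfolding c_def by (simp add: permutes_inverses[OF \<phi>p])
    have "le a c" using H'[OF cN a] pc refl inN[OF \<pi> a] by simp
    then have 1: "le (\<phi> a) (\<pi> a)" using mono[OF a cN] pc by simp
    have 2: "le (\<pi> a) (\<phi> a)" using H'[OF a a] refl a by simp
    show ?thesis using antisym[OF inN[OF \<pi> a] inN[OF \<phi>p a] 2 1] .
  qed
  have comm: "\<pi> \<circ> p = p \<circ> \<pi>"
  proof
    fix x show "(\<pi> \<circ> p) x = (p \<circ> \<pi>) x"
    proof (cases "x < N")
      case True
      then have "\<pi> x = invf p (\<pi> (p x))" using eq unfolding \<phi>_def by simp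
      then have "p (\<pi> x) = \<pi> (p x)" by (simp add: permutes_inverses[OF p])
      then show ?thesis by simp
    next
      case False
      then show ?thesis using permutes_not_in[OF p] permutes_not_in[OF \<pi>] by simp
    qed
  qed
  have "le (\<pi> j) (\<pi> i) \<longleftrightarrow> le j i" if "i < N" "j < N" for i j
    using H'[OF that] eq[OF that(1)] by simp
  then show ?thesis using comm by blast
qed

lemma order_core_conv:
  fixes le :: "nat \<Rightarrow> nat \<Rightarrow> bool"
  assumes p: "p permutes {..<N}" and \<pi>: "\<pi> permutes {..<N}"
    and comm: "\<pi> \<circ> p = p \<circ> \<pi>" and A: "\<forall>i<N. \<forall>j<N. le (\<pi> j) (\<pi> i) \<longleftrightarrow> le j i"
  shows "\<forall>i<N. \<forall>j<N. le (\<pi> j) (invf p (\<pi> i)) \<longleftrightarrow> le j (invf p i)"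
proof (intro allI impI)
  fix i j assume i: "i < N" and j: "j < N"
  have "invf p (\<pi> i) = \<pi> (invf p i)"
  proof -
    have "p (\<pi> (invf p i)) = \<pi> (p (invf p i))" using comm by (metis comp_apply)
    then show ?thesis by (simp add: permutes_inverses[OF p] permutes_inv_eq[OF p])
  qed
  moreover have "invf p i < N" using permutes_in_image[OF permutes_inv[OF p]] i by simp
  ultimately show "le (\<pi> j) (invf p (\<pi> i)) \<longleftrightarrow> le j (invf p i)" using A j by simp
qed


definition Sb :: "nat \<Rightarrow> nat \<Rightarrow> nat set" where
  "Sb m j = {l \<in> {1..m}. index_bit m j l}"

definition idx :: "nat \<Rightarrow> nat set \<Rightarrow> nat" where
  "idx m A = bits_index m (\<lambda>l. l \<in> A)"

lemma Sb_sub: "Sb m j \<subseteq> {1..m}" by (auto simp: Sb_def)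

lemma idx_lt: "idx m A < 2 ^ m" by (simp add: idx_def bits_index_lt)

lemma Sb_idx: "A \<subseteq> {1..m} \<Longrightarrow> Sb m (idx m A) = A"
  by (auto simp: Sb_def idx_def index_bit_bits_index)

lemma idx_Sb: "j < 2 ^ m \<Longrightarrow> idx m (Sb m j) = j"
proof -
  assume j: "j < 2 ^ m"
  have "idx m (Sb m j) = bits_index m (index_bit m j)"
    unfolding idx_def by (rule bits_index_cong) (auto simp: Sb_def)
  then show ?thesis using bits_index_index_bit[OF j] by simp
qed

lemma Sb_inj: "i < 2 ^ m \<Longrightarrow> j < 2 ^ m \<Longrightarrow> Sb m i = Sb m j \<Longrightarrow> i = j"
  by (metis idx_Sb)

lemma bits_Sb: "(\<forall>k<m. bit j k \<longrightarrow> bit i k) \<longleftrightarrow> Sb m j \<subseteq> Sb m i"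
proof
  assume h: "\<forall>k<m. bit j k \<longrightarrow> bit i k"
  show "Sb m j \<subseteq> Sb m i"
  proof
    fix l assume "l \<in> Sb m j"
    then have "l \<in> {1..m}" "bit j (m - l)" by (auto simp: Sb_def index_bit_bit)
    then show "l \<in> Sb m i" using h by (auto simp: Sb_def index_bit_bit)
  qed
next
  assume h: "Sb m j \<subseteq> Sb m i"
  show "\<forall>k<m. bit j k \<longrightarrow> bit i k"
  proof (intro allI impI)
    fix k assume k: "k < m" and b: "bit j k"
    have "m - k \<in> Sb m j" using k b by (auto simp: Sb_def index_bit_bit)
    then have "m - k \<in> Sb m i" using h by blast
    then show "bit i k" using k by (auto simp: Sb_def index_bit_bit)
  qed
qed

lemma Tm_carrier: "Tm m \<in> carrier_mat (2^m) (2^m)" using Tm_entry by blast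

lemma Tm_entry': "i < 2^m \<Longrightarrow> j < 2^m \<Longrightarrow> Tm m $$ (i, j) = (if Sb m j \<subseteq> Sb m i then 1 else 0)"
  using Tm_entry[of m] bits_Sb by simp

definition Bf :: "nat \<Rightarrow> (nat \<Rightarrow> nat) \<Rightarrow> nat \<Rightarrow> nat" where
  "Bf m \<tau> j = (if j < 2 ^ m then bits_index m (\<lambda>l. index_bit m j (\<tau> l)) else j)"

lemma Psig_pm: "Psig m \<tau> = pm (2 ^ m) (Bf m \<tau>)"
  unfolding Psig_def pm_def Bf_def by (rule cong_mat) simp_all

lemma Bf_lt: "j < 2 ^ m \<Longrightarrow> Bf m \<tau> j < 2 ^ m"
  by (simp add: Bf_def bits_index_lt)

lemma Bf_comp:
  assumes t: "\<tau> permutes {1..m}"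
  shows "Bf m \<tau> \<circ> Bf m \<rho> = Bf m (\<rho> \<circ> \<tau>)"
proof
  fix j show "(Bf m \<tau> \<circ> Bf m \<rho>) j = Bf m (\<rho> \<circ> \<tau>) j"
  proof (cases "j < 2 ^ m")
    case True
    have "Bf m \<tau> (Bf m \<rho> j) = bits_index m (\<lambda>l. index_bit m (Bf m \<rho> j) (\<tau> l))"
      using Bf_lt[OF True] by (simp add: Bf_def)
    also have "\<dots> = bits_index m (\<lambda>l. index_bit m j (\<rho> (\<tau> l)))"
    proof (rule bits_index_cong)
      fix l assume "l \<in> {1..m}"
      then have "\<tau> l \<in> {1..m}" using permutes_in_image[OF t] by simp
      then show "index_bit m (Bf m \<rho> j) (\<tau> l) = index_bit m j (\<rho> (\<tau> l))"
        using True by (simp add: Bf_def index_bit_bits_index)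
    qed
    finally show ?thesis using True by (simp add: Bf_def)
  next
    case False
    then show ?thesis by (simp add: Bf_def)
  qed
qed

lemma Bf_id: "Bf m id = id"
proof
  fix j show "Bf m id j = id j"
    by (cases "j < 2 ^ m") (simp_all add: Bf_def bits_index_index_bit)
qed

lemma Bf_permutes:
  assumes t: "\<tau> permutes {1..m}"
  shows "Bf m \<tau> permutes {..<2 ^ m}"
proof -
  have ti: "invf \<tau> permutes {1..m}" using permutes_inv[OF t] .
  have 1: "Bf m \<tau> \<circ> Bf m (invf \<tau>) = id"
    using Bf_comp[OF t, of "invf \<tau>"] Bf_id permutes_inv_o(2)[OF t] by simp
  have 2: "Bf m (invf \<tau>) \<circ> Bf m \<tau> = id"
    using Bf_comp[OF ti, of \<tau>] Bf_id permutes_inv_o(1)[OF t] by simp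
  have "bij (Bf m \<tau>)" using o_bij[OF 2 1] .
  then show ?thesis unfolding permutes_def bij_iff
    by (auto simp: Bf_def)
qed

lemma Sb_Bf:
  assumes t: "\<tau> permutes {1..m}" and j: "j < 2 ^ m"
  shows "Sb m (Bf m \<tau> j) = {l \<in> {1..m}. \<tau> l \<in> Sb m j}"
proof -
  have "index_bit m (Bf m \<tau> j) l = index_bit m j (\<tau> l)" if "l \<in> {1..m}" for l
    using j that by (simp add: Bf_def index_bit_bits_index)
  moreover have "\<tau> l \<in> {1..m} \<longleftrightarrow> l \<in> {1..m}" for l using permutes_in_image[OF t] .
  ultimately show ?thesis unfolding Sb_def by blast
qed

lemma preimage_sub:
  fixes \<tau> :: "nat \<Rightarrow> nat"
  assumes t: "\<tau> permutes U" and A: "A \<subseteq> U" and A': "A' \<subseteq> U"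
  shows "{l \<in> U. \<tau> l \<in> A} \<subseteq> {l \<in> U. \<tau> l \<in> A'} \<longleftrightarrow> A \<subseteq> A'"
proof
  assume h: "{l \<in> U. \<tau> l \<in> A} \<subseteq> {l \<in> U. \<tau> l \<in> A'}"
  show "A \<subseteq> A'"
  proof
    fix x assume x: "x \<in> A"
    then have "invf \<tau> x \<in> U" using A permutes_in_image[OF permutes_inv[OF t]] by auto
    moreover have "\<tau> (invf \<tau> x) = x" by (simp add: permutes_inverses[OF t])
    ultimately show "x \<in> A'" using h x by auto
  qed
qed auto

lemma Bf_aut:
  assumes t: "\<tau> permutes {1..m}" and i: "i < 2 ^ m" and j: "j < 2 ^ m"
  shows "Sb m (Bf m \<tau> j) \<subseteq> Sb m (Bf m \<tau> i) \<longleftrightarrow> Sb m j \<subseteq> Sb m i"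
  using Sb_Bf[OF t i] Sb_Bf[OF t j] preimage_sub[OF t Sb_sub Sb_sub] by simp

lemma Bf_inj:
  assumes t: "\<tau> permutes {1..m}" and r: "\<rho> permutes {1..m}" and e: "Bf m \<tau> = Bf m \<rho>"
  shows "\<tau> = \<rho>"
proof
  fix l0 show "\<tau> l0 = \<rho> l0"
  proof (cases "l0 \<in> {1..m}")
    case True
    have tl: "\<tau> l0 \<in> {1..m}" using permutes_in_image[OF t] True by simp
    define j where "j = idx m {\<tau> l0}"
    have jl: "j < 2 ^ m" by (simp add: j_def idx_lt)
    have Sj: "Sb m j = {\<tau> l0}" unfolding j_def using tl by (simp add: Sb_idx)
    have "Sb m (Bf m \<tau> j) = Sb m (Bf m \<rho> j)" using e by simp
    then have "{l \<in> {1..m}. \<tau> l \<in> {\<tau> l0}} = {l \<in> {1..m}. \<rho> l \<in> {\<tau> l0}}"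
      using Sb_Bf[OF t jl] Sb_Bf[OF r jl] Sj by simp
    then have "l0 \<in> {l \<in> {1..m}. \<rho> l \<in> {\<tau> l0}}" using True by blast
    then show ?thesis by simp
  next
    case False
    then show ?thesis using permutes_not_in[OF t] permutes_not_in[OF r] by simp
  qed
qed

lemma lattice_aut:
  fixes \<Phi> :: "'a set \<Rightarrow> 'a set"
  assumes U: "finite U"
    and into: "\<And>A. A \<subseteq> U \<Longrightarrow> \<Phi> A \<subseteq> U"
    and onto: "\<And>B. B \<subseteq> U \<Longrightarrow> \<exists>A\<subseteq>U. \<Phi> A = B"
    and ord: "\<And>A B. A \<subseteq> U \<Longrightarrow> B \<subseteq> U \<Longrightarrow> \<Phi> A \<subseteq> \<Phi> B \<longleftrightarrow> A \<subseteq> B"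
  shows "\<exists>\<rho>. \<rho> permutes U \<and> (\<forall>A\<subseteq>U. \<Phi> A = \<rho> ` A)"
proof -
  have e0: "\<Phi> {} = {}"
  proof -
    obtain B where "B \<subseteq> U" "\<Phi> B = {}" using onto[of "{}"] by blast
    then show ?thesis using ord[of "{}" B] by auto
  qed
  have ne: "\<Phi> A \<noteq> {}" if "A \<subseteq> U" "A \<noteq> {}" for A
    using ord[of A "{}"] that e0 by auto
  have sing: "\<exists>x. \<Phi> {l} = {x}" if l: "l \<in> U" for l
  proof -
    obtain x where x: "x \<in> \<Phi> {l}" using ne[of "{l}"] l by auto
    have xU: "{x} \<subseteq> U" using into[of "{l}"] l x by auto
    obtain C where C: "C \<subseteq> U" "\<Phi> C = {x}" using onto[OF xU] by blast
    have "C \<subseteq> {l}" using ord[of C "{l}"] C x l by auto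
    moreover have "C \<noteq> {}" using C e0 by auto
    ultimately have "C = {l}" by blast
    then show ?thesis using C by blast
  qed
  define \<rho> where "\<rho> l = (if l \<in> U then (THE x. \<Phi> {l} = {x}) else l)" for l
  have \<rho>s: "\<Phi> {l} = {\<rho> l}" if "l \<in> U" for l
    using sing[OF that] that unfolding \<rho>_def by (auto intro: theI2)
  have \<rho>U: "\<rho> l \<in> U" if "l \<in> U" for l using into[of "{l}"] \<rho>s[OF that] that by auto
  have inj: "inj_on \<rho> U"
  proof (rule inj_onI)
    fix a b assume a: "a \<in> U" and b: "b \<in> U" and e: "\<rho> a = \<rho> b"
    then have "\<Phi> {a} \<subseteq> \<Phi> {b}" using \<rho>s by simp
    then show "a = b" using ord[of "{a}" "{b}"] a b by auto
  qed
  have img: "\<rho> ` U = U" using endo_inj_surj[OF U _ inj] \<rho>U by auto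
  have perm: "\<rho> permutes U"
  proof (rule bij_imp_permutes)
    show "bij_betw \<rho> U U" using inj img by (simp add: bij_betw_def)
    fix x assume "x \<notin> U" then show "\<rho> x = x" by (simp add: \<rho>_def)
  qed
  have "\<Phi> A = \<rho> ` A" if A: "A \<subseteq> U" for A
  proof
    show "\<Phi> A \<subseteq> \<rho> ` A"
    proof
      fix x assume x: "x \<in> \<Phi> A"
      have xU: "{x} \<subseteq> U" using into[OF A] x by auto
      obtain C where C: "C \<subseteq> U" "\<Phi> C = {x}" using onto[OF xU] by blast
      obtain l where l: "l \<in> C" using C(2) e0 by (metis ex_in_conv insert_not_empty)
      have lU: "l \<in> U" using C l by auto
      have "\<Phi> {l} \<subseteq> \<Phi> C" using ord[of "{l}" C] C l lU by auto
      then have rl: "\<rho> l = x" using \<rho>s[OF lU] C by auto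
      have "\<Phi> {l} \<subseteq> \<Phi> A" using rl \<rho>s[OF lU] x by auto
      then have "l \<in> A" using ord[of "{l}" A] lU A by auto
      then show "x \<in> \<rho> ` A" using rl by auto
    qed
  next
    show "\<rho> ` A \<subseteq> \<Phi> A"
    proof
      fix x assume "x \<in> \<rho> ` A"
      then obtain l where l: "l \<in> A" "x = \<rho> l" by auto
      have lU: "l \<in> U" using l A by auto
      have "\<Phi> {l} \<subseteq> \<Phi> A" using ord[of "{l}" A] l lU A by auto
      then show "x \<in> \<Phi> A" using \<rho>s[OF lU] l by auto
    qed
  qed
  then show ?thesis using perm by blast
qed

lemma Bf_surj:
  assumes \<pi>: "\<pi> permutes {..<2 ^ m}"
    and A: "\<forall>i<2 ^ m. \<forall>j<2 ^ m. Sb m (\<pi> j) \<subseteq> Sb m (\<pi> i) \<longleftrightarrow> Sb m j \<subseteq> Sb m i"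
  shows "\<exists>\<tau>. \<tau> permutes {1..m} \<and> \<pi> = Bf m \<tau>"
proof -
  have inN: "\<And>x. x < 2 ^ m \<Longrightarrow> \<pi> x < 2 ^ m" using permutes_in_image[OF \<pi>] by simp
  define \<Phi> where "\<Phi> A = Sb m (\<pi> (idx m A))" for A
  have "\<exists>\<rho>. \<rho> permutes {1..m} \<and> (\<forall>A\<subseteq>{1..m}. \<Phi> A = \<rho> ` A)"
  proof (rule lattice_aut)
    show "\<Phi> A \<subseteq> {1..m}" for A unfolding \<Phi>_def by (rule Sb_sub)
    show "\<exists>A\<subseteq>{1..m}. \<Phi> A = B" if B: "B \<subseteq> {1..m}" for B
    proof -
      define j where "j = invf \<pi> (idx m B)"
      have jN: "j < 2 ^ m" unfolding j_def
        using permutes_in_image[OF permutes_inv[OF \<pi>]] idx_lt by simp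
      have "\<Phi> (Sb m j) = Sb m (\<pi> j)" by (simp add: \<Phi>_def idx_Sb[OF jN])
      also have "\<dots> = B" by (simp add: j_def permutes_inverses[OF \<pi>] Sb_idx[OF B])
      finally show ?thesis using Sb_sub by blast
    qed
    show "\<Phi> A \<subseteq> \<Phi> B \<longleftrightarrow> A \<subseteq> B" if "A \<subseteq> {1..m}" "B \<subseteq> {1..m}" for A B
      using A[rule_format, of "idx m B" "idx m A"] idx_lt[of m] that
      by (simp add: \<Phi>_def Sb_idx)
  qed simp
  then obtain \<rho> where \<rho>: "\<rho> permutes {1..m}" and \<Phi>\<rho>: "\<forall>A\<subseteq>{1..m}. \<Phi> A = \<rho> ` A" by blast
  define \<tau> where "\<tau> = invf \<rho>"
  have t: "\<tau> permutes {1..m}" unfolding \<tau>_def using permutes_inv[OF \<rho>] .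
  have "\<pi> = Bf m \<tau>"
  proof
    fix j show "\<pi> j = Bf m \<tau> j"
    proof (cases "j < 2 ^ m")
      case True
      have "Sb m (\<pi> j) = \<rho> ` Sb m j"
        using \<Phi>\<rho>[rule_format, OF Sb_sub[of m j]] idx_Sb[OF True] by (simp add: \<Phi>_def)
      also have "\<dots> = {l \<in> {1..m}. \<tau> l \<in> Sb m j}"
      proof
        show "\<rho> ` Sb m j \<subseteq> {l \<in> {1..m}. \<tau> l \<in> Sb m j}"
        proof
          fix y assume "y \<in> \<rho> ` Sb m j"
          then obtain x where x: "x \<in> Sb m j" "y = \<rho> x" by blast
          have "x \<in> {1..m}" using x Sb_sub by blast
          then have "\<rho> x \<in> {1..m}" using permutes_in_image[OF \<rho>] by blast
          moreover have "\<tau> (\<rho> x) = x" by (simp add: \<tau>_def permutes_inverses[OF \<rho>])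
          ultimately show "y \<in> {l \<in> {1..m}. \<tau> l \<in> Sb m j}" using x by simp
        qed
        show "{l \<in> {1..m}. \<tau> l \<in> Sb m j} \<subseteq> \<rho> ` Sb m j"
        proof
          fix l assume l: "l \<in> {l \<in> {1..m}. \<tau> l \<in> Sb m j}"
          have "l = \<rho> (\<tau> l)" by (simp add: \<tau>_def permutes_inverses[OF \<rho>])
          then show "l \<in> \<rho> ` Sb m j" using l by blast
        qed
      qed
      also have "\<dots> = Sb m (Bf m \<tau> j)" using Sb_Bf[OF t True] by simp
      finally show ?thesis using Sb_inj[OF inN[OF True] Bf_lt[OF True]] by simp
    next
      case False
      then show ?thesis using permutes_not_in[OF \<pi>] by (simp add: Bf_def)
    qed
  qed
  then show ?thesis using t by blast
qed


lemma pm_comm: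
  assumes a: "\<pi> permutes {..<n}" and b: "p permutes {..<n}"
  shows "pm n \<pi> * pm n p = pm n p * pm n \<pi> \<longleftrightarrow> \<pi> \<circ> p = p \<circ> \<pi>"
  using pm_inj[OF permutes_compose[OF b a] permutes_compose[OF a b]]
  by (auto simp: pm_mult[OF a b] pm_mult[OF b a])

lemma if01: "((if a then 1 else 0) = (if b then 1 else (0::int))) \<longleftrightarrow> (a \<longleftrightarrow> b)"
  by auto

lemma Aut_T_iff:
  "Q \<in> Aut (Tm m) \<longleftrightarrow> (\<exists>\<pi>. \<pi> permutes {..<2^m} \<and> Q = pm (2^m) \<pi> \<and>
     (\<forall>i<2^m. \<forall>j<2^m. Sb m (\<pi> j) \<subseteq> Sb m (\<pi> i) \<longleftrightarrow> Sb m j \<subseteq> Sb m i))"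
proof -
  have "(\<forall>i<2^m. \<forall>j<2^m. Tm m $$ (\<pi> i, \<pi> j) = Tm m $$ (i, j)) \<longleftrightarrow>
        (\<forall>i<2^m. \<forall>j<2^m. Sb m (\<pi> j) \<subseteq> Sb m (\<pi> i) \<longleftrightarrow> Sb m j \<subseteq> Sb m i)"
    if p: "\<pi> permutes {..<2^m}" for \<pi>
  proof -
    have "\<And>x. x < 2^m \<Longrightarrow> \<pi> x < 2^m" using permutes_in_image[OF p] by simp
    then show ?thesis by (simp add: Tm_entry' if01)
  qed
  then show ?thesis unfolding Aut_iff[OF Tm_carrier] by metis
qed

theorem mainTheorem13:
  fixes m :: nat and P :: "int mat"
  assumes "P \<in> Aut (Tm m)"
  shows "Aut (P * Tm m) = {Q \<in> Aut (Tm m). Q * P = P * Q} \<and>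
         (\<forall>\<sigma>. \<sigma> permutes {1..m} \<and> P = Psig m \<sigma> \<longrightarrow>
           Aut (P * Tm m) = {Psig m \<tau> | \<tau>. \<tau> permutes {1..m} \<and> \<tau> \<circ> \<sigma> = \<sigma> \<circ> \<tau>})"
proof -
  define N where "N = (2::nat) ^ m"
  define le where "le j i \<longleftrightarrow> Sb m j \<subseteq> Sb m i" for j i
  have TC: "Tm m \<in> carrier_mat N N" unfolding N_def by (rule Tm_carrier)
  obtain p where p: "p permutes {..<N}" and P: "P = pm N p"
    using assms unfolding Aut_T_iff N_def by blast
  have PTC: "P * Tm m \<in> carrier_mat N N" unfolding P by (rule mult_carrier_mat[OF pm_carrier(1) TC])
  have inN: "\<And>f x. f permutes {..<N} \<Longrightarrow> x < N \<Longrightarrow> f x < N"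
    using permutes_in_image by fastforce
  have A1: "Q \<in> Aut (P * Tm m) \<longleftrightarrow> (\<exists>\<pi>. \<pi> permutes {..<N} \<and> Q = pm N \<pi> \<and>
     (\<forall>i<N. \<forall>j<N. le (\<pi> j) (invf p (\<pi> i)) \<longleftrightarrow> le j (invf p i)))" for Q
  proof -
    have "(\<forall>i<N. \<forall>j<N. (P * Tm m) $$ (\<pi> i, \<pi> j) = (P * Tm m) $$ (i, j)) \<longleftrightarrow>
          (\<forall>i<N. \<forall>j<N. le (\<pi> j) (invf p (\<pi> i)) \<longleftrightarrow> le j (invf p i))"
      if q: "\<pi> permutes {..<N}" for \<pi>
    proof -
      have e: "(P * Tm m) $$ (i, j) = (if le j (invf p i) then 1 else 0)" if "i < N" "j < N" for i j
        using pm_left[OF p TC that] Tm_entry'[of "invf p i" m j] inN[OF permutes_inv[OF p] that(1)] that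
        unfolding P N_def le_def by simp
      show ?thesis using inN[OF q] by (simp add: e if01)
    qed
    then show ?thesis unfolding Aut_iff[OF PTC] by metis
  qed
  have A2: "Q \<in> Aut (Tm m) \<longleftrightarrow> (\<exists>\<pi>. \<pi> permutes {..<N} \<and> Q = pm N \<pi> \<and>
     (\<forall>i<N. \<forall>j<N. le (\<pi> j) (\<pi> i) \<longleftrightarrow> le j i))" for Q
    unfolding Aut_T_iff N_def le_def by simp
  have part1: "Aut (P * Tm m) = {Q \<in> Aut (Tm m). Q * P = P * Q}"
  proof (rule equalityI; rule subsetI)
    fix Q assume "Q \<in> Aut (P * Tm m)"
    then obtain \<pi> where \<pi>: "\<pi> permutes {..<N}" "Q = pm N \<pi>"
      and H: "\<forall>i<N. \<forall>j<N. le (\<pi> j) (invf p (\<pi> i)) \<longleftrightarrow> le j (invf p i)"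
      using A1 by blast
    have "\<pi> \<circ> p = p \<circ> \<pi> \<and> (\<forall>i<N. \<forall>j<N. le (\<pi> j) (\<pi> i) \<longleftrightarrow> le j i)"
      by (rule order_core[OF _ _ _ p \<pi>(1) H]) (auto simp: le_def N_def intro: Sb_inj)
    then show "Q \<in> {Q \<in> Aut (Tm m). Q * P = P * Q}"
      using A2 \<pi> pm_comm[OF \<pi>(1) p] P by blast
  next
    fix Q assume "Q \<in> {Q \<in> Aut (Tm m). Q * P = P * Q}"
    then obtain \<pi> where \<pi>: "\<pi> permutes {..<N}" "Q = pm N \<pi>"
      and A: "\<forall>i<N. \<forall>j<N. le (\<pi> j) (\<pi> i) \<longleftrightarrow> le j i" and c: "Q * P = P * Q"
      using A2 by blast
    have "\<pi> \<circ> p = p \<circ> \<pi>" using c pm_comm[OF \<pi>(1) p] P \<pi>(2) by simp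
    then show "Q \<in> Aut (P * Tm m)"
      using A1 \<pi> order_core_conv[OF p \<pi>(1) _ A] by blast
  qed
  have part2: "Aut (P * Tm m) = {Psig m \<tau> | \<tau>. \<tau> permutes {1..m} \<and> \<tau> \<circ> \<sigma> = \<sigma> \<circ> \<tau>}"
    if s: "\<sigma> permutes {1..m}" and Ps: "P = Psig m \<sigma>" for \<sigma>
  proof -
    have bs: "Bf m \<sigma> permutes {..<N}" unfolding N_def by (rule Bf_permutes[OF s])
    have PB: "P = pm N (Bf m \<sigma>)" using Ps Psig_pm N_def by simp
    have comm_iff: "Bf m \<tau> \<circ> Bf m \<sigma> = Bf m \<sigma> \<circ> Bf m \<tau> \<longleftrightarrow> \<tau> \<circ> \<sigma> = \<sigma> \<circ> \<tau>"
      if t: "\<tau> permutes {1..m}" for \<tau>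
    proof -
      have "Bf m \<tau> \<circ> Bf m \<sigma> = Bf m \<sigma> \<circ> Bf m \<tau> \<longleftrightarrow> Bf m (\<sigma> \<circ> \<tau>) = Bf m (\<tau> \<circ> \<sigma>)"
        by (simp add: Bf_comp[OF t] Bf_comp[OF s])
      also have "\<dots> \<longleftrightarrow> \<sigma> \<circ> \<tau> = \<tau> \<circ> \<sigma>"
        using Bf_inj[OF permutes_compose[OF t s] permutes_compose[OF s t]] by auto
      finally show ?thesis by metis
    qed
    show ?thesis unfolding part1
    proof (rule equalityI; rule subsetI)
      fix Q assume "Q \<in> {Q \<in> Aut (Tm m). Q * P = P * Q}"
      then obtain \<pi> where \<pi>: "\<pi> permutes {..<N}" "Q = pm N \<pi>"
        and A: "\<forall>i<N. \<forall>j<N. le (\<pi> j) (\<pi> i) \<longleftrightarrow> le j i" and c: "Q * P = P * Q"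
        using A2 by blast
      obtain \<tau> where t: "\<tau> permutes {1..m}" and \<pi>\<tau>: "\<pi> = Bf m \<tau>"
        using Bf_surj[of \<pi> m] \<pi>(1) A unfolding N_def le_def by blast
      have "\<pi> \<circ> Bf m \<sigma> = Bf m \<sigma> \<circ> \<pi>" using c pm_comm[OF \<pi>(1) bs] PB \<pi>(2) by simp
      then have "\<tau> \<circ> \<sigma> = \<sigma> \<circ> \<tau>" using comm_iff[OF t] \<pi>\<tau> by simp
      moreover have "Q = Psig m \<tau>" using \<pi>(2) \<pi>\<tau> Psig_pm N_def by simp
      ultimately show "Q \<in> {Psig m \<tau> | \<tau>. \<tau> permutes {1..m} \<and> \<tau> \<circ> \<sigma> = \<sigma> \<circ> \<tau>}" using t by blast
    next
      fix Q assume "Q \<in> {Psig m \<tau> | \<tau>. \<tau> permutes {1..m} \<and> \<tau> \<circ> \<sigma> = \<sigma> \<circ> \<tau>}"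
      then obtain \<tau> where t: "\<tau> permutes {1..m}" and c: "\<tau> \<circ> \<sigma> = \<sigma> \<circ> \<tau>" and Q: "Q = Psig m \<tau>"
        by blast
      have bt: "Bf m \<tau> permutes {..<N}" unfolding N_def by (rule Bf_permutes[OF t])
      have QB: "Q = pm N (Bf m \<tau>)" using Q Psig_pm N_def by simp
      have "Q \<in> Aut (Tm m)" unfolding A2 using bt QB Bf_aut[OF t] unfolding N_def le_def by blast
      moreover have "Q * P = P * Q"
        using pm_comm[OF bt bs] comm_iff[OF t] c QB PB by simp
      ultimately show "Q \<in> {Q \<in> Aut (Tm m). Q * P = P * Q}" by blast
    qed
  qed
  show ?thesis using part1 part2 by blast
qed

end
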